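(* If $A\subseteq\mathbb{N}$ is pseudorandom, then there are infinite sets $B,C\subseteq\mathbb{N}$ such that $B+C\subseteq A$.
   Context: $\mathbb{N}=\{1,2,3,\dots\}$, $[1,n]=\{1,\dots,n\}$, $B+C=\{b+c:b\in B,c\in C\}$, $A-i=\{a-i:a\in A\}$. The upper density of $A\subseteq\mathbb{N}$ is $\overline{d}(A)=\limsup_{n\to\infty}\frac{|A\cap[1,n]|}{n}$. Work in a countably saturated nonstandard universe; ${}^*X$ denotes the nonstandard extension of $X$ and $\operatorname{st}$ the standard part. For hyperfinite $N\in{}^*\mathbb{N}\setminus\mathbb{N}$ and $X\subseteq\mathbb{N}$ write $X_N={}^*X\cap[1,N]$; the Loeb measure $\mu_N$ on $[1,N]$ is the countably additive extension of $\mu_N(Y)=\operatorname{st}(|Y|/N)$ for internal $Y\subseteq[1,N]$. Definition: $A\subseteq\mathbb{N}$ with $\overline{d}(A)=\alpha>0$ is pseudorandom if there is $N\in{}^*\mathbb{N}\setminus\mathbb{N}$ with $\mu_N(A_N)=\alpha$ such that $\chi_{A_N}-\alpha$ is weakly mixing for the unitary operator $U_T f=f\circ T$ on $L^2(\mu_N)$, where $T(x)=x+1\pmod N$ on $[1,N]$; here $x$ in a Hilbert space is weakly mixing for a unitary $U$ if $\lim_{n\to\infty}\frac1n\sum_{i=1}^n|\langle U^ix,x\rangle|=0$. Equivalently, there is such $N$ with $\lim_{n\to\infty}\frac1n\sum_{i=1}^n|\mu_N(A_N\cap(A-i)_N)-\alpha^2|=0$. *)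

theory Defs
  imports "HOL-Analysis.Analysis" "HOL-Library.Liminf_Limsup"
begin

text \<open>Natural numbers in the paper are positive: the paper's \<open>\<nat>\<close> is \<open>{1..}\<close>.\<close>

definition upper_density :: "nat set \<Rightarrow> ereal" where
  "upper_density A = limsup (\<lambda>n. ereal (real (card (A \<inter> {1..n})) / real n))"

definition free_ultrafilter :: "nat filter \<Rightarrow> bool" where
  "free_ultrafilter U \<longleftrightarrow> U \<noteq> bot \<and> U \<le> cofinite \<and>
     (\<forall>P. eventually P U \<or> eventually (\<lambda>x. \<not> P x) U)"

text \<open>Nonstandard setting realised as the ultrapower by a free ultrafilter \<open>U\<close> on \<open>\<nat>\<close>
  (a countably saturated universe).  A hyperfinite \<open>N = [Nk]_U\<close> is infinite iff
  \<open>Nk \<rightarrow> \<infinity>\<close> along \<open>U\<close>.  For an internal set \<open>Y = [Yk]_U \<subseteq> [1,N]\<close>, the Loeb measure is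
  \<open>\<mu>_N(Y) = st(|Y|/N)\<close>, i.e. the \<open>U\<close>-limit of \<open>|Yk|/Nk\<close>.  Here
  \<open>A_N \<inter> (A-i)_N = {x \<in> [1,N]. x \<in> *A \<and> x+i \<in> *A}\<close>.\<close>

definition loeb_measure_std :: "nat filter \<Rightarrow> (nat \<Rightarrow> nat) \<Rightarrow> nat set \<Rightarrow> real \<Rightarrow> bool" where
  "loeb_measure_std U Nk Y m \<longleftrightarrow>
     ((\<lambda>k. real (card (Y \<inter> {1..Nk k})) / real (Nk k)) \<longlongrightarrow> m) U"

definition pseudorandom :: "nat set \<Rightarrow> bool" where
  "pseudorandom A \<longleftrightarrow> (\<exists>\<alpha>::real. \<alpha> > 0 \<and> upper_density A = ereal \<alpha> \<and>
     (\<exists>U Nk c. free_ultrafilter U \<and> filterlim Nk at_top U \<and>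
        loeb_measure_std U Nk A \<alpha> \<and>
        (\<forall>i\<ge>1. loeb_measure_std U Nk {x \<in> A. x + i \<in> A} (c i)) \<and>
        (\<lambda>n. (\<Sum>i=1..n. \<bar>c i - \<alpha>\<^sup>2\<bar>) / real n) \<longlonglongrightarrow> 0))"

end

theory Submission
  imports Defs
begin

lemma ult_lim:
  fixes s :: "nat \<Rightarrow> real"
  assumes fu: "free_ultrafilter U" and b: "\<And>k. \<bar>s k\<bar> \<le> M"
  shows "\<exists>L. (s \<longlongrightarrow> L) U"
proof -
  have cpt: "compact {-M..M}" by simp
  have nb: "filtermap s U \<noteq> bot" using fu by (simp add: free_ultrafilter_def filtermap_bot_iff)
  have "\<forall>k. s k \<in> {-M..M}"
  proof
    fix k show "s k \<in> {-M..M}" using b[of k] by (auto simp: abs_le_iff)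
  qed
  then have ev: "eventually (\<lambda>x. x \<in> {-M..M}) (filtermap s U)"
    by (simp add: eventually_filtermap always_eventually)
  obtain L where L: "inf (nhds L) (filtermap s U) \<noteq> bot"
    using cpt[unfolded compact_filter] nb ev by blast
  have "(s \<longlongrightarrow> L) U"
  proof (rule topological_tendstoI)
    fix V assume V: "open V" "L \<in> V"
    show "eventually (\<lambda>k. s k \<in> V) U"
    proof (rule ccontr)
      assume "\<not> eventually (\<lambda>k. s k \<in> V) U"
      then have e2: "eventually (\<lambda>k. s k \<notin> V) U" using fu unfolding free_ultrafilter_def by blast
      have "eventually (\<lambda>x. x \<in> V) (nhds L)" using V eventually_nhds by blast
      moreover have "eventually (\<lambda>x. x \<notin> V) (filtermap s U)" using e2 by (simp add: eventually_filtermap)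
      ultimately have "eventually (\<lambda>x. False) (inf (nhds L) (filtermap s U))"
        unfolding eventually_inf by blast
      then show False using L by (simp add: eventually_False)
    qed
  qed
  then show ?thesis by blast
qed

locale ult =
  fixes U :: "nat filter" and Nk :: "nat \<Rightarrow> nat"
  assumes fu: "free_ultrafilter U" and Nlim: "filterlim Nk at_top U"
begin

definition avs :: "(nat \<Rightarrow> real) \<Rightarrow> nat \<Rightarrow> real" where
  "avs f k = (\<Sum>x=1..Nk k. f x) / real (Nk k)"

definition HA :: "(nat \<Rightarrow> real) \<Rightarrow> real \<Rightarrow> bool" where
  "HA f L \<longleftrightarrow> (avs f \<longlongrightarrow> L) U"

definition Av :: "(nat \<Rightarrow> real) \<Rightarrow> real" where
  "Av f = Lim U (avs f)"

lemma Unb: "U \<noteq> bot" using fu by (simp add: free_ultrafilter_def)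

lemma evN: "eventually (\<lambda>k. Nk k \<ge> n) U"
  using Nlim by (simp add: filterlim_at_top)

lemma realN: "filterlim (\<lambda>k. real (Nk k)) at_top U"
  using filterlim_compose[OF filterlim_real_sequentially Nlim] by (simp add: o_def)

lemma invN0: "((\<lambda>k. C / real (Nk k)) \<longlongrightarrow> 0) U"
  by (rule tendsto_divide_0[OF tendsto_const filterlim_at_top_imp_at_infinity[OF realN]])

lemma avs_bound:
  assumes "\<And>x. \<bar>f x\<bar> \<le> M" shows "\<bar>avs f k\<bar> \<le> M"
proof (cases "Nk k = 0")
  case True then show ?thesis using assms[of 0] by (simp add: avs_def)
next
  case False
  have "\<bar>\<Sum>x=1..Nk k. f x\<bar> \<le> (\<Sum>x=1..Nk k. \<bar>f x\<bar>)" by (rule sum_abs)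
  also have "\<dots> \<le> (\<Sum>x=1..Nk k. M)" by (rule sum_mono) (use assms in auto)
  also have "\<dots> = real (Nk k) * M" by simp
  finally have h: "\<bar>\<Sum>x=1..Nk k. f x\<bar> \<le> real (Nk k) * M" .
  have pos: "real (Nk k) > 0" using False by simp
  have "\<bar>avs f k\<bar> = \<bar>\<Sum>x=1..Nk k. f x\<bar> / real (Nk k)" by (simp add: avs_def abs_divide)
  also have "\<dots> \<le> real (Nk k) * M / real (Nk k)" by (rule divide_right_mono[OF h]) simp
  also have "\<dots> = M" using pos by simp
  finally show ?thesis .
qed

lemma HA_ex: assumes "\<And>x. \<bar>f x\<bar> \<le> M" shows "HA f (Av f)"
proof -
  have "\<And>k. \<bar>avs f k\<bar> \<le> M" by (rule avs_bound[OF assms])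
  then obtain L where "(avs f \<longlongrightarrow> L) U" using ult_lim[OF fu] by blast
  moreover have "\<not> trivial_limit U" using Unb by (simp add: trivial_limit_def)
  ultimately have "Lim U (avs f) = L" by (intro tendsto_Lim)
  then show ?thesis unfolding HA_def Av_def using \<open>(avs f \<longlongrightarrow> L) U\<close> by simp
qed

lemma HA_Av: "HA f L \<Longrightarrow> Av f = L"
proof -
  assume h: "HA f L"
  have "\<not> trivial_limit U" using Unb by (simp add: trivial_limit_def)
  then show ?thesis using h unfolding HA_def Av_def by (rule tendsto_Lim)
qed

lemma HA_le: assumes "HA f L" "HA g M" "\<And>x. f x \<le> g x" shows "L \<le> M"
proof -
  have "avs f k \<le> avs g k" for k
    unfolding avs_def by (rule divide_right_mono) (auto intro: sum_mono assms(3))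
  then show ?thesis using assms(1,2) Unb unfolding HA_def
    by (intro tendsto_le[of U "avs g" M "avs f" L]) (auto intro: always_eventually)
qed

lemma HA_bound: assumes "HA f L" "\<And>x. \<bar>f x\<bar> \<le> M" shows "\<bar>L\<bar> \<le> M"
proof -
  have "\<bar>avs f k\<bar> \<le> M" for k by (rule avs_bound[OF assms(2)])
  then have "\<forall>k. avs f k \<in> {-M..M}" by (meson abs_le_iff atLeastAtMost_iff minus_le_iff)
  then have "L \<in> {-M..M}" using assms(1) Unb unfolding HA_def
    by (auto intro!: tendsto_lowerbound[of "avs f" L U "-M"] tendsto_upperbound[of "avs f" L U M] always_eventually)
  then show ?thesis by (auto simp: abs_le_iff)
qed

lemma HA_add: "HA f L \<Longrightarrow> HA g M \<Longrightarrow> HA (\<lambda>x. f x + g x) (L + M)"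
proof -
  assume h: "HA f L" "HA g M"
  have e: "avs (\<lambda>x. f x + g x) = (\<lambda>k. avs f k + avs g k)"
    by (rule ext) (simp add: avs_def sum.distrib add_divide_distrib)
  show ?thesis using h unfolding HA_def e by (rule tendsto_add)
qed

lemma HA_cmult: "HA f L \<Longrightarrow> HA (\<lambda>x. c * f x) (c * L)"
proof -
  assume h: "HA f L"
  have e: "avs (\<lambda>x. c * f x) = (\<lambda>k. c * avs f k)" by (rule ext) (simp add: avs_def sum_distrib_left)
  show ?thesis using h unfolding HA_def e by (intro tendsto_mult_left)
qed

lemma HA_sum: "finite I \<Longrightarrow> (\<And>i. i \<in> I \<Longrightarrow> HA (f i) (L i)) \<Longrightarrow> HA (\<lambda>x. \<Sum>i\<in>I. f i x) (\<Sum>i\<in>I. L i)"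
proof -
  assume fin: "finite I" and h: "\<And>i. i \<in> I \<Longrightarrow> HA (f i) (L i)"
  have "avs (\<lambda>x. \<Sum>i\<in>I. f i x) = (\<lambda>k. \<Sum>i\<in>I. avs (f i) k)"
  proof
    fix k
    have "avs (\<lambda>x. \<Sum>i\<in>I. f i x) k = (\<Sum>i\<in>I. \<Sum>x=1..Nk k. f i x) / real (Nk k)"
      unfolding avs_def by (subst sum.swap) (rule refl)
    also have "\<dots> = (\<Sum>i\<in>I. avs (f i) k)" by (simp add: avs_def sum_divide_distrib)
    finally show "avs (\<lambda>x. \<Sum>i\<in>I. f i x) k = (\<Sum>i\<in>I. avs (f i) k)" .
  qed
  then show ?thesis using h unfolding HA_def by (simp add: tendsto_sum)
qed

lemma HA_const: "HA (\<lambda>x. c) c"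
proof -
  have "eventually (\<lambda>k. avs (\<lambda>x. c) k = c) U"
    using evN[of 1] by eventually_elim (simp add: avs_def)
  then show ?thesis unfolding HA_def by (rule tendsto_eventually)
qed

lemma avs_ind: "avs (indicator S) k = real (card (S \<inter> {1..Nk k})) / real (Nk k)"
proof -
  have c: "(\<Sum>x=1..N. indicator S x) = real (card (S \<inter> {1..N}))" for N
    using sum.inter_restrict[of "{1..N}" "\<lambda>_. 1::real" S] by (simp add: indicator_def Int_commute)
  show ?thesis by (simp only: avs_def c)
qed

lemma HA_density0:
  assumes "(\<lambda>n. real (card (S \<inter> {1..n})) / real n) \<longlonglongrightarrow> 0"
  shows "HA (indicator S) 0"
proof -
  have c: "(\<Sum>x=1..N. indicator S x) = real (card (S \<inter> {1..N}))" for N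
    using sum.inter_restrict[of "{1..N}" "\<lambda>_. 1::real" S] by (simp add: indicator_def Int_commute)
  have "avs (indicator S) = (\<lambda>n. real (card (S \<inter> {1..n})) / real n) \<circ> Nk"
    by (rule ext) (simp only: avs_def c o_def)
  then show ?thesis unfolding HA_def comp_def using filterlim_compose[OF assms Nlim] by simp
qed

lemma shift_diff:
  fixes f :: "nat \<Rightarrow> real"
  assumes "\<And>x. \<bar>f x\<bar> \<le> M"
  shows "\<bar>(\<Sum>x=1..N. f (x+j)) - (\<Sum>x=1..N. f x)\<bar> \<le> 2 * real j * M"
proof (induction j)
  case 0 then show ?case by simp
next
  case (Suc j)
  have "(\<Sum>x=1..N. f (x + Suc j)) - (\<Sum>x=1..N. f (x+j)) = (\<Sum>x=1..N. f (Suc x + j) - f (x+j))"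
    by (simp add: sum_subtractf)
  also have "\<dots> = f (Suc N + j) - f (1 + j)"
    using sum_Suc_diff[of 1 N "\<lambda>x. f (x+j)"] by simp
  finally have h1: "\<bar>(\<Sum>x=1..N. f (x + Suc j)) - (\<Sum>x=1..N. f (x+j))\<bar> \<le> 2 * M"
    using assms[of "Suc N + j"] assms[of "1+j"] by linarith
  have e: "2 * real (Suc j) * M = 2*M + 2*real j*M" by (simp add: algebra_simps)
  define S1 where "S1 = (\<Sum>x=1..N. f (x + Suc j))"
  define Sj where "Sj = (\<Sum>x=1..N. f (x + j))"
  define S0 where "S0 = (\<Sum>x=1..N. f x)"
  have a1: "\<bar>S1 - Sj\<bar> \<le> 2 * M" using h1 unfolding S1_def Sj_def .
  have a2: "\<bar>Sj - S0\<bar> \<le> 2 * real j * M" using Suc.IH unfolding Sj_def S0_def .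
  have "\<bar>S1 - S0\<bar> \<le> \<bar>S1 - Sj\<bar> + \<bar>Sj - S0\<bar>"
    using abs_triangle_ineq[of "S1 - Sj" "Sj - S0"] by simp
  then have "\<bar>S1 - S0\<bar> \<le> 2 * real (Suc j) * M" unfolding e using a1 a2 by linarith
  then show ?case unfolding S1_def S0_def .
qed

lemma HA_shift:
  assumes "\<And>x. \<bar>f x\<bar> \<le> M" "HA f L"
  shows "HA (\<lambda>x. f (x + j)) L"
proof -
  have "((\<lambda>k. avs (\<lambda>x. f (x+j)) k - avs f k) \<longlongrightarrow> 0) U"
  proof (rule Lim_null_comparison)
    show "((\<lambda>k. (2 * real j * M) / real (Nk k)) \<longlongrightarrow> 0) U" by (rule invN0)
    show "eventually (\<lambda>k. norm (avs (\<lambda>x. f (x+j)) k - avs f k) \<le> (2 * real j * M) / real (Nk k)) U"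
    proof (intro always_eventually allI)
      fix k
      define D where "D = (\<Sum>x=1..Nk k. f (x+j)) - (\<Sum>x=1..Nk k. f x)"
      have e: "avs (\<lambda>x. f (x+j)) k - avs f k = D / real (Nk k)"
        unfolding D_def by (simp add: avs_def diff_divide_distrib)
      have h: "\<bar>D\<bar> \<le> 2 * real j * M"
        unfolding D_def by (rule shift_diff[of f M j "Nk k", OF assms(1)])
      have "\<bar>D / real (Nk k)\<bar> = \<bar>D\<bar> / real (Nk k)" by (simp add: abs_divide)
      also have "\<dots> \<le> (2 * real j * M) / real (Nk k)" by (rule divide_right_mono[OF h]) simp
      finally show "norm (avs (\<lambda>x. f (x+j)) k - avs f k) \<le> (2 * real j * M) / real (Nk k)"
        unfolding e real_norm_def .
    qed
  qed
  then have "((\<lambda>k. (avs (\<lambda>x. f (x+j)) k - avs f k) + avs f k) \<longlongrightarrow> 0 + L) U"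
    using assms(2) unfolding HA_def by (intro tendsto_add)
  moreover have "(\<lambda>k. (avs (\<lambda>x. f (x+j)) k - avs f k) + avs f k) = avs (\<lambda>x. f (x+j))"
    by (rule ext) simp
  ultimately show ?thesis unfolding HA_def by simp
qed

end


lemma sum_inj_le:
  fixes f :: "nat \<Rightarrow> real"
  assumes "inj_on \<phi> S" "\<phi> ` S \<subseteq> T" "finite T" "\<And>d. 0 \<le> f d"
  shows "(\<Sum>j\<in>S. f (\<phi> j)) \<le> (\<Sum>d\<in>T. f d)"
proof -
  have "(\<Sum>j\<in>S. f (\<phi> j)) = (\<Sum>d\<in>\<phi> ` S. f d)" using sum.reindex[OF assms(1), of f] by simp
  also have "\<dots> \<le> (\<Sum>d\<in>T. f d)" by (rule sum_mono2[OF assms(3,2)]) (use assms(4) in auto)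
  finally show ?thesis .
qed

lemma dsum:
  fixes f :: "nat \<Rightarrow> real"
  assumes f0: "\<And>d. 0 \<le> f d"
  shows "(\<Sum>i=1..n. \<Sum>j=1..n. f (if j \<le> i then i - j else j - i)) \<le> 2 * real n * (\<Sum>d=0..n. f d)"
proof -
  have inner: "(\<Sum>j=1..n. f (if j \<le> i then i - j else j - i)) \<le> 2 * (\<Sum>d=0..n. f d)" if i: "i \<in> {1..n}" for i
  proof -
    have "(\<Sum>j\<in>{1..n}. f (if j \<le> i then i - j else j - i)) =
      (\<Sum>j\<in>{1..n} \<inter> {..i}. f (if j \<le> i then i - j else j - i)) + (\<Sum>j\<in>{1..n} - {..i}. f (if j \<le> i then i - j else j - i))"
      by (rule sum.Int_Diff) simp
    also have "(\<Sum>j\<in>{1..n} \<inter> {..i}. f (if j \<le> i then i - j else j - i)) = (\<Sum>j\<in>{1..n} \<inter> {..i}. f (i - j))"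
      by (rule sum.cong) auto
    also have "(\<Sum>j\<in>{1..n} - {..i}. f (if j \<le> i then i - j else j - i)) = (\<Sum>j\<in>{1..n} - {..i}. f (j - i))"
      by (rule sum.cong) auto
    also have "(\<Sum>j\<in>{1..n} \<inter> {..i}. f (i - j)) \<le> (\<Sum>d\<in>{0..n}. f d)"
      by (rule sum_inj_le[OF _ _ _ f0]) (use i in \<open>auto simp: inj_on_def\<close>)
    also have "(\<Sum>j\<in>{1..n} - {..i}. f (j - i)) \<le> (\<Sum>d\<in>{0..n}. f d)"
      by (rule sum_inj_le[OF _ _ _ f0]) (use i in \<open>auto simp: inj_on_def\<close>)
    finally show ?thesis by simp
  qed
  have "(\<Sum>i=1..n. \<Sum>j=1..n. f (if j \<le> i then i - j else j - i)) \<le> (\<Sum>i=1..n. 2 * (\<Sum>d=0..n. f d))"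
    by (rule sum_mono) (rule inner)
  also have "\<dots> = 2 * real n * (\<Sum>d=0..n. f d)" by simp
  finally show ?thesis .
qed

locale prand = ult +
  fixes A :: "nat set" and \<alpha> :: real and c :: "nat \<Rightarrow> real"
  assumes apos: "\<alpha> > 0" and hA: "HA (indicator A) \<alpha>"
    and hc: "\<And>i. i \<ge> 1 \<Longrightarrow> HA (\<lambda>x. indicator A x * indicator A (x + i)) (c i)"
    and ces: "(\<lambda>n. (\<Sum>i=1..n. \<bar>c i - \<alpha>\<^sup>2\<bar>) / real n) \<longlonglongrightarrow> 0"
begin

definition aa :: "nat \<Rightarrow> real" where "aa x = indicator A x - \<alpha>"

definition K :: real where "K = 1 + \<alpha>"

lemma ind_bound: "\<bar>indicator S x :: real\<bar> \<le> 1" by (simp add: indicator_def)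

lemma aa_bound: "\<bar>aa x\<bar> \<le> K" using apos by (auto simp: aa_def K_def indicator_def abs_le_iff)

lemma K_pos: "K > 0" using apos by (simp add: K_def)

lemma aa2_bound: "\<bar>aa x * aa y\<bar> \<le> K * K"
  unfolding abs_mult by (rule mult_mono) (use aa_bound K_pos in auto)

lemma HA_indA_shift: "HA (\<lambda>x. indicator A (x + i)) \<alpha>"
  by (rule HA_shift[OF ind_bound hA])

definition r :: "nat \<Rightarrow> real" where "r d = Av (\<lambda>x. aa x * aa (x + d))"

lemma HA_r: "HA (\<lambda>x. aa x * aa (x + d)) (r d)"
  unfolding r_def by (rule HA_ex[OF aa2_bound])

lemma r_eq: assumes "d \<ge> 1" shows "r d = c d - \<alpha>\<^sup>2"
proof -
  have e: "(\<lambda>x. aa x * aa (x + d)) = (\<lambda>x. (indicator A x * indicator A (x + d) + (-\<alpha>) * indicator A (x + d)) + ((-\<alpha>) * indicator A x + \<alpha>\<^sup>2))"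
    by (rule ext) (simp add: aa_def algebra_simps power2_eq_square)
  have "HA (\<lambda>x. aa x * aa (x + d)) ((c d + (-\<alpha>) * \<alpha>) + ((-\<alpha>) * \<alpha> + \<alpha>\<^sup>2))"
    unfolding e by (intro HA_add HA_cmult hc[OF assms] HA_indA_shift hA HA_const)
  then have "r d = (c d + (-\<alpha>) * \<alpha>) + ((-\<alpha>) * \<alpha> + \<alpha>\<^sup>2)" unfolding r_def by (rule HA_Av)
  then show ?thesis by (simp add: power2_eq_square)
qed

definition dd :: "nat \<Rightarrow> nat \<Rightarrow> nat" where "dd i j = (if j \<le> i then i - j else j - i)"

lemma HA_pair: "HA (\<lambda>x. aa (x + i) * aa (x + j)) (r (dd i j))"
proof (cases "j \<le> i")
  case True
  have h: "HA (\<lambda>x. aa (x + j) * aa (x + j + (i - j))) (r (i - j))"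
    by (rule HA_shift[OF aa2_bound HA_r[of "i - j"], of j])
  have e2: "(\<lambda>x. aa (x + j) * aa (x + j + (i - j))) = (\<lambda>x. aa (x + i) * aa (x + j))"
  proof
    fix x
    have "x + j + (i - j) = x + i" using True by simp
    then show "aa (x + j) * aa (x + j + (i - j)) = aa (x + i) * aa (x + j)" by (simp only: mult.commute)
  qed
  have e1: "dd i j = i - j" using True by (simp add: dd_def)
  show ?thesis using h unfolding e1 e2 .
next
  case False
  have h: "HA (\<lambda>x. aa (x + i) * aa (x + i + (j - i))) (r (j - i))"
    by (rule HA_shift[OF aa2_bound HA_r[of "j - i"], of i])
  have e2: "(\<lambda>x. aa (x + i) * aa (x + i + (j - i))) = (\<lambda>x. aa (x + i) * aa (x + j))"
  proof
    fix x
    have "x + i + (j - i) = x + j" using False by simp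
    then show "aa (x + i) * aa (x + i + (j - i)) = aa (x + i) * aa (x + j)" by (simp only:)
  qed
  have e1: "dd i j = j - i" using False by (simp add: dd_def)
  show ?thesis using h unfolding e1 e2 .
qed


definition lam :: "nat set \<Rightarrow> nat \<Rightarrow> real" where
  "lam Y i = Av (\<lambda>x. indicator Y x * aa (x + i))"

lemma ga_bound: "\<bar>indicator Y x * aa (x + i)\<bar> \<le> K"
proof -
  have "\<bar>indicator Y x :: real\<bar> * \<bar>aa (x + i)\<bar> \<le> 1 * K"
    by (rule mult_mono) (auto simp: ind_bound aa_bound)
  then show ?thesis by (simp add: abs_mult)
qed

lemma HA_lam: "HA (\<lambda>x. indicator Y x * aa (x + i)) (lam Y i)"
  unfolding lam_def by (rule HA_ex[OF ga_bound])

lemma lam_bound: "\<bar>lam Y i\<bar> \<le> K"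
  by (rule HA_bound[OF HA_lam ga_bound])

lemma HA_YA: assumes "HA (indicator Y) \<gamma>"
  shows "HA (\<lambda>x. indicator Y x * indicator A (x + i)) (lam Y i + \<alpha> * \<gamma>)"
proof -
  have e: "(\<lambda>x. indicator Y x * indicator A (x + i)) = (\<lambda>x. indicator Y x * aa (x + i) + \<alpha> * indicator Y x)"
    by (rule ext) (simp add: aa_def algebra_simps)
  show ?thesis unfolding e by (intro HA_add HA_lam HA_cmult assms)
qed

lemma pw_ineq:
  fixes g h t :: real
  assumes "g = 0 \<or> g = 1" "t > 0"
  shows "g * h \<le> t / 2 + (1 / (2 * t)) * (h * h)"
proof -
  have "0 \<le> (t - h) * (t - h)" by simp
  then have a: "2 * t * h \<le> t * t + h * h" by (simp add: algebra_simps)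
  have "h \<le> t / 2 + (1 / (2 * t)) * (h * h)"
  proof -
    have "h = (2 * t * h) / (2 * t)" using assms(2) by simp
    also have "\<dots> \<le> (t * t + h * h) / (2 * t)" by (rule divide_right_mono[OF a]) (use assms(2) in simp)
    also have "\<dots> = t / 2 + (1 / (2 * t)) * (h * h)" using assms(2) by (simp add: field_simps)
    finally show ?thesis .
  qed
  moreover have "0 \<le> t / 2 + (1 / (2 * t)) * (h * h)" using assms(2) by simp
  ultimately show ?thesis using assms(1) by auto
qed

lemma main_ineq:
  assumes t: "t > 0"
  shows "(\<Sum>i=1..n. lam Y i * lam Y i) \<le> t / 2 + (K * K * (2 * real n * (\<Sum>d=0..n. \<bar>r d\<bar>))) / (2 * t)"
proof -
  define h where "h x = (\<Sum>i=1..n. lam Y i * aa (x + i))" for x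
  define Q where "Q = (\<Sum>i=1..n. \<Sum>j=1..n. lam Y i * lam Y j * r (dd i j))"
  have e1: "(\<lambda>x. indicator Y x * h x) = (\<lambda>x. \<Sum>i\<in>{1..n}. lam Y i * (indicator Y x * aa (x + i)))"
    by (rule ext) (simp add: h_def sum_distrib_left mult_ac)
  have E1: "HA (\<lambda>x. indicator Y x * h x) (\<Sum>i\<in>{1..n}. lam Y i * lam Y i)"
    unfolding e1 by (intro HA_sum HA_cmult HA_lam) simp
  have e2: "(\<lambda>x. h x * h x) = (\<lambda>x. \<Sum>i\<in>{1..n}. \<Sum>j\<in>{1..n}. (lam Y i * lam Y j) * (aa (x + i) * aa (x + j)))"
    by (rule ext) (simp add: h_def sum_product mult_ac)
  have E2: "HA (\<lambda>x. h x * h x) Q"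
    unfolding e2 Q_def by (intro HA_sum HA_cmult HA_pair) simp_all
  have E3: "HA (\<lambda>x. t / 2 + (1 / (2 * t)) * (h x * h x)) (t / 2 + (1 / (2 * t)) * Q)"
    by (intro HA_add HA_const HA_cmult E2)
  have le1: "(\<Sum>i\<in>{1..n}. lam Y i * lam Y i) \<le> t / 2 + (1 / (2 * t)) * Q"
    by (rule HA_le[OF E1 E3]) (rule pw_ineq[OF _ t], simp add: indicator_def)
  have "Q \<le> (\<Sum>i=1..n. \<Sum>j=1..n. K * K * \<bar>r (dd i j)\<bar>)"
    unfolding Q_def
  proof (intro sum_mono)
    fix i j
    have "lam Y i * lam Y j * r (dd i j) \<le> \<bar>lam Y i\<bar> * \<bar>lam Y j\<bar> * \<bar>r (dd i j)\<bar>"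
      by (metis abs_ge_self abs_mult)
    also have "\<dots> \<le> K * K * \<bar>r (dd i j)\<bar>"
      by (intro mult_right_mono mult_mono lam_bound) (use K_pos in auto)
    finally show "lam Y i * lam Y j * r (dd i j) \<le> K * K * \<bar>r (dd i j)\<bar>" .
  qed
  also have "\<dots> = K * K * (\<Sum>i=1..n. \<Sum>j=1..n. \<bar>r (dd i j)\<bar>)" by (simp add: sum_distrib_left)
  also have "\<dots> \<le> K * K * (2 * real n * (\<Sum>d=0..n. \<bar>r d\<bar>))"
    by (rule mult_left_mono) (use dsum[of "\<lambda>d. \<bar>r d\<bar>" n] K_pos in \<open>auto simp: dd_def\<close>)
  finally have "Q \<le> K * K * (2 * real n * (\<Sum>d=0..n. \<bar>r d\<bar>))" .
  then have "Q / (2 * t) \<le> (K * K * (2 * real n * (\<Sum>d=0..n. \<bar>r d\<bar>))) / (2 * t)"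
    by (rule divide_right_mono) (use t in simp)
  then show ?thesis using le1 by simp
qed

definition R :: "nat \<Rightarrow> real" where "R n = (\<Sum>d=0..n. \<bar>r d\<bar>)"

lemma R_lim: "(\<lambda>n. R n / real n) \<longlonglongrightarrow> 0"
proof -
  have e: "R n / real n = \<bar>r 0\<bar> / real n + (\<Sum>i=1..n. \<bar>c i - \<alpha>\<^sup>2\<bar>) / real n" for n
  proof -
    have "R n = \<bar>r 0\<bar> + (\<Sum>d=1..n. \<bar>r d\<bar>)" unfolding R_def by (simp add: sum.atLeast_Suc_atMost)
    also have "(\<Sum>d=1..n. \<bar>r d\<bar>) = (\<Sum>i=1..n. \<bar>c i - \<alpha>\<^sup>2\<bar>)" by (rule sum.cong) (auto simp: r_eq)
    finally show ?thesis by (simp add: add_divide_distrib)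
  qed
  have "(\<lambda>n. \<bar>r 0\<bar> / real n) \<longlonglongrightarrow> 0"
    by (rule tendsto_divide_0[OF tendsto_const filterlim_at_top_imp_at_infinity[OF filterlim_real_sequentially]])
  then have "(\<lambda>n. \<bar>r 0\<bar> / real n + (\<Sum>i=1..n. \<bar>c i - \<alpha>\<^sup>2\<bar>) / real n) \<longlonglongrightarrow> 0 + 0"
    by (intro tendsto_add ces)
  then show ?thesis unfolding e by simp
qed

lemma S_lim: "(\<lambda>n. (\<Sum>i=1..n. lam Y i * lam Y i) / real n) \<longlonglongrightarrow> 0"
proof (rule LIMSEQ_I)
  fix \<epsilon> :: real assume ep: "\<epsilon> > 0"
  define Xs where "Xs n = K * K * (R n / real n) / \<epsilon>" for n
  have "(\<lambda>n. K * K * (R n / real n) / \<epsilon>) \<longlonglongrightarrow> K * K * 0 / \<epsilon>"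
    by (intro tendsto_divide tendsto_mult_left R_lim tendsto_const) (use ep in simp)
  then have Xslim: "Xs \<longlonglongrightarrow> 0" unfolding Xs_def by simp
  have "\<exists>no. \<forall>n\<ge>no. norm (Xs n - 0) < \<epsilon> / 2" by (rule LIMSEQ_D[OF Xslim]) (use ep in simp)
  then obtain no where no: "\<And>n. n \<ge> no \<Longrightarrow> norm (Xs n - 0) < \<epsilon> / 2" by blast
  have "norm ((\<Sum>i=1..n. lam Y i * lam Y i) / real n - 0) < \<epsilon>" if n: "n \<ge> max no 1" for n
  proof -
    have npos: "real n > 0" using n by simp
    have t: "\<epsilon> * real n > 0" using ep npos by simp
    have S0: "0 \<le> (\<Sum>i=1..n. lam Y i * lam Y i)" by (intro sum_nonneg) simp
    have m: "(\<Sum>i=1..n. lam Y i * lam Y i) \<le> \<epsilon> * real n / 2 + (K * K * (2 * real n * R n)) / (2 * (\<epsilon> * real n))"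
      using main_ineq[OF t, where n=n and Y=Y] unfolding R_def .
    have "(K * K * (2 * real n * R n)) / (2 * (\<epsilon> * real n)) = real n * (K * K * (R n / real n) / \<epsilon>)"
      using npos ep by (simp add: field_simps)
    with m have m2: "(\<Sum>i=1..n. lam Y i * lam Y i) \<le> real n * (\<epsilon> / 2 + K * K * (R n / real n) / \<epsilon>)"
      by (simp add: algebra_simps)
    have "Xs n < \<epsilon> / 2" using no[of n] n abs_ge_self[of "Xs n"] by auto
    then have b: "K * K * (R n / real n) / \<epsilon> < \<epsilon> / 2" unfolding Xs_def .
    have "(\<Sum>i=1..n. lam Y i * lam Y i) / real n \<le> \<epsilon> / 2 + K * K * (R n / real n) / \<epsilon>"
      using m2 npos by (simp add: divide_le_eq mult.commute)
    then have "(\<Sum>i=1..n. lam Y i * lam Y i) / real n < \<epsilon>" using b by linarith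
    moreover have "0 \<le> (\<Sum>i=1..n. lam Y i * lam Y i) / real n" using S0 npos by simp
    ultimately show ?thesis by simp
  qed
  then show "\<exists>no. \<forall>n\<ge>no. norm ((\<Sum>i=1..n. lam Y i * lam Y i) / real n - 0) < \<epsilon>" by blast
qed

definition Bad :: "nat set \<Rightarrow> real \<Rightarrow> nat set" where
  "Bad Y \<gamma> = {i. 1 \<le> i \<and> Av (\<lambda>x. indicator Y x * indicator A (x + i)) \<le> \<alpha> * \<gamma> / 2}"

lemma Bad_density:
  assumes Y: "HA (indicator Y) \<gamma>" and g: "\<gamma> > 0"
  shows "(\<lambda>n. real (card (Bad Y \<gamma> \<inter> {1..n})) / real n) \<longlonglongrightarrow> 0"
proof (rule tendsto_sandwich[of "\<lambda>n. 0" _ sequentially "\<lambda>n. ((\<Sum>i=1..n. lam Y i * lam Y i) / real n) / ((\<alpha> * \<gamma> / 2) * (\<alpha> * \<gamma> / 2))"])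
  define p where "p = \<alpha> * \<gamma> / 2"
  have p: "p > 0" using apos g by (simp add: p_def)
  have lamBad: "p * p \<le> lam Y i * lam Y i" if i: "i \<in> Bad Y \<gamma>" for i
  proof -
    have "Av (\<lambda>x. indicator Y x * indicator A (x + i)) = lam Y i + \<alpha> * \<gamma>" by (rule HA_Av[OF HA_YA[OF Y]])
    with i have "lam Y i + \<alpha> * \<gamma> \<le> \<alpha> * \<gamma> / 2" by (simp add: Bad_def)
    then have "p \<le> - lam Y i" by (simp add: p_def)
    then have "p * p \<le> (- lam Y i) * (- lam Y i)" using p by (intro mult_mono) auto
    then show ?thesis by simp
  qed
  show "\<forall>\<^sub>F n in sequentially. 0 \<le> real (card (Bad Y \<gamma> \<inter> {1..n})) / real n" by simp
  show "\<forall>\<^sub>F n in sequentially. real (card (Bad Y \<gamma> \<inter> {1..n})) / real n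
      \<le> ((\<Sum>i=1..n. lam Y i * lam Y i) / real n) / ((\<alpha> * \<gamma> / 2) * (\<alpha> * \<gamma> / 2))"
  proof (intro always_eventually allI)
    fix n
    have "real (card (Bad Y \<gamma> \<inter> {1..n})) * (p * p) = (\<Sum>i\<in>Bad Y \<gamma> \<inter> {1..n}. p * p)" by simp
    also have "\<dots> \<le> (\<Sum>i\<in>Bad Y \<gamma> \<inter> {1..n}. lam Y i * lam Y i)" by (rule sum_mono) (use lamBad in auto)
    also have "\<dots> \<le> (\<Sum>i\<in>{1..n}. lam Y i * lam Y i)" by (rule sum_mono2) auto
    finally have c: "real (card (Bad Y \<gamma> \<inter> {1..n})) * (p * p) \<le> (\<Sum>i=1..n. lam Y i * lam Y i)" .
    have "real (card (Bad Y \<gamma> \<inter> {1..n})) / real n * (p * p) = real (card (Bad Y \<gamma> \<inter> {1..n})) * (p * p) / real n"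
      by simp
    also have "\<dots> \<le> (\<Sum>i=1..n. lam Y i * lam Y i) / real n" by (rule divide_right_mono[OF c]) simp
    finally have F: "real (card (Bad Y \<gamma> \<inter> {1..n})) / real n * (p * p) \<le> (\<Sum>i=1..n. lam Y i * lam Y i) / real n" .
    have pp: "0 < p * p" using p by simp
    have "real (card (Bad Y \<gamma> \<inter> {1..n})) / real n \<le> ((\<Sum>i=1..n. lam Y i * lam Y i) / real n) / (p * p)"
      using F pos_le_divide_eq[OF pp] by blast
    then show "real (card (Bad Y \<gamma> \<inter> {1..n})) / real n \<le> ((\<Sum>i=1..n. lam Y i * lam Y i) / real n) / ((\<alpha> * \<gamma> / 2) * (\<alpha> * \<gamma> / 2))"
      by (simp add: p_def)
  qed
  show "(\<lambda>n. 0) \<longlonglongrightarrow> 0" by simp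
  have "(\<lambda>n. ((\<Sum>i=1..n. lam Y i * lam Y i) / real n) / ((\<alpha> * \<gamma> / 2) * (\<alpha> * \<gamma> / 2))) \<longlonglongrightarrow> 0 / ((\<alpha> * \<gamma> / 2) * (\<alpha> * \<gamma> / 2))"
    by (intro tendsto_divide S_lim tendsto_const) (use apos g in simp)
  then show "(\<lambda>n. ((\<Sum>i=1..n. lam Y i * lam Y i) / real n) / ((\<alpha> * \<gamma> / 2) * (\<alpha> * \<gamma> / 2))) \<longlonglongrightarrow> 0" by simp
qed


lemma HA_finite0: assumes "finite S" shows "HA (indicator S) 0"
proof (rule HA_density0)
  show "(\<lambda>n. real (card (S \<inter> {1..n})) / real n) \<longlonglongrightarrow> 0"
  proof (rule tendsto_sandwich[of "\<lambda>n. 0" _ sequentially "\<lambda>n. real (card S) / real n"])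
    show "\<forall>\<^sub>F n in sequentially. 0 \<le> real (card (S \<inter> {1..n})) / real n" by simp
    show "\<forall>\<^sub>F n in sequentially. real (card (S \<inter> {1..n})) / real n \<le> real (card S) / real n"
      by (intro always_eventually allI divide_right_mono) (simp_all add: card_mono assms)
    show "(\<lambda>n. 0) \<longlonglongrightarrow> (0::real)" by simp
    show "(\<lambda>n. real (card S) / real n) \<longlonglongrightarrow> 0"
      by (rule tendsto_divide_0[OF tendsto_const filterlim_at_top_imp_at_infinity[OF filterlim_real_sequentially]])
  qed
qed

definition goodset :: "nat set \<Rightarrow> bool" where
  "goodset X \<longleftrightarrow> (\<exists>\<beta>>0. HA (indicator X) \<beta>)"

lemma select:
  assumes "goodset X" "goodset Y"
  shows "\<exists>i\<in>X. m < i \<and> goodset (Y \<inter> {x. x + i \<in> A})"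
proof -
  obtain \<beta> where b: "\<beta> > 0" "HA (indicator X) \<beta>" using assms(1) unfolding goodset_def by blast
  obtain \<gamma> where g: "\<gamma> > 0" "HA (indicator Y) \<gamma>" using assms(2) unfolding goodset_def by blast
  define G where "G = X - Bad Y \<gamma> - {..m}"
  have hB: "HA (indicator (Bad Y \<gamma>)) 0" by (rule HA_density0[OF Bad_density[OF g(2) g(1)]])
  have hM: "HA (indicator {..m}) 0" by (rule HA_finite0) simp
  have hG: "HA (indicator G) (Av (indicator G))" by (rule HA_ex[OF ind_bound])
  have "\<beta> \<le> Av (indicator G) + 0 + 0"
    by (rule HA_le[OF b(2) HA_add[OF HA_add[OF hG hB] hM]]) (auto simp: G_def indicator_def)
  then have pos: "Av (indicator G) > 0" using b by simp
  have "G \<noteq> {}"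
  proof
    assume "G = {}"
    then have "indicator G = (\<lambda>x. 0::real)" by (intro ext) simp
    then have "HA (indicator G) 0" using HA_const[of 0] by simp
    then show False using HA_Av pos by force
  qed
  then obtain i where i: "i \<in> G" by blast
  then have iX: "i \<in> X" "m < i" "i \<notin> Bad Y \<gamma>" by (auto simp: G_def)
  then have "1 \<le> i" by simp
  with iX have gt: "Av (\<lambda>x. indicator Y x * indicator A (x + i)) > \<alpha> * \<gamma> / 2" by (auto simp: Bad_def)
  have e: "indicator (Y \<inter> {x. x + i \<in> A}) = (\<lambda>x. indicator Y x * indicator A (x + i) :: real)"
    by (rule ext) (simp add: indicator_def)
  have "HA (indicator (Y \<inter> {x. x + i \<in> A})) (Av (\<lambda>x. indicator Y x * indicator A (x + i)))"
    unfolding e by (rule HA_ex[of _ 1]) (simp add: indicator_def)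
  moreover have "\<alpha> * \<gamma> / 2 > 0" using apos g by simp
  ultimately have "goodset (Y \<inter> {x. x + i \<in> A})" using gt unfolding goodset_def by (meson less_trans)
  then show ?thesis using iX by blast
qed

definition nxtb :: "nat set \<Rightarrow> nat set \<Rightarrow> nat \<Rightarrow> nat" where
  "nxtb X Y m = (SOME b. b \<in> Y \<and> m < b \<and> goodset (X \<inter> {x. x + b \<in> A}))"

definition nxtc :: "nat set \<Rightarrow> nat set \<Rightarrow> nat \<Rightarrow> nat" where
  "nxtc X Y b = (SOME c. c \<in> X \<and> b < c \<and> goodset (Y \<inter> {y. y + c \<in> A}))"

primrec st :: "nat \<Rightarrow> nat set \<times> nat set \<times> nat \<times> nat" where
  "st 0 = (UNIV, UNIV, 0, 0)"
| "st (Suc n) = (let X = fst (st n); Y = fst (snd (st n)); m = snd (snd (snd (st n)));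
     b = nxtb X Y m; X' = X \<inter> {x. x + b \<in> A}; c = nxtc X' Y b in (X', Y \<inter> {y. y + c \<in> A}, b, c))"

definition XX where "XX n = fst (st n)"
definition YY where "YY n = fst (snd (st n))"
definition mm where "mm n = snd (snd (snd (st n)))"
definition bb where "bb n = fst (snd (snd (st (Suc n))))"
definition cc where "cc n = snd (snd (snd (st (Suc n))))"

lemma st_facts:
  "XX 0 = UNIV" "YY 0 = UNIV" "mm 0 = 0"
  "bb n = nxtb (XX n) (YY n) (mm n)"
  "XX (Suc n) = XX n \<inter> {x. x + bb n \<in> A}"
  "cc n = nxtc (XX (Suc n)) (YY n) (bb n)"
  "YY (Suc n) = YY n \<inter> {y. y + cc n \<in> A}"
  "mm (Suc n) = cc n"
  by (simp_all add: XX_def YY_def mm_def bb_def cc_def Let_def)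

lemma goodset_UNIV: "goodset UNIV"
proof -
  have "indicator UNIV = (\<lambda>x. 1::real)" by (rule ext) simp
  then have "HA (indicator UNIV) 1" using HA_const[of 1] by simp
  then show ?thesis unfolding goodset_def by (intro exI[of _ 1]) simp
qed

lemma step:
  assumes gX: "goodset (XX n)" and gY: "goodset (YY n)"
  shows "bb n \<in> YY n \<and> mm n < bb n \<and> goodset (XX (Suc n)) \<and> cc n \<in> XX (Suc n) \<and> bb n < cc n \<and> goodset (YY (Suc n))"
proof -
  have "\<exists>b. b \<in> YY n \<and> mm n < b \<and> goodset (XX n \<inter> {x. x + b \<in> A})"
    using select[OF gY gX, of "mm n"] by blast
  then have b: "bb n \<in> YY n \<and> mm n < bb n \<and> goodset (XX (Suc n))"
    unfolding st_facts(4,5) nxtb_def by (rule someI_ex)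
  then have "\<exists>c. c \<in> XX (Suc n) \<and> bb n < c \<and> goodset (YY n \<inter> {y. y + c \<in> A})"
    using select[OF _ gY, of "XX (Suc n)" "bb n"] by blast
  then have c: "cc n \<in> XX (Suc n) \<and> bb n < cc n \<and> goodset (YY (Suc n))"
    unfolding st_facts(6,7) nxtc_def by (rule someI_ex)
  show ?thesis using b c by blast
qed

lemma inv: "goodset (XX n) \<and> goodset (YY n)"
proof (induction n)
  case 0 then show ?case by (simp add: st_facts goodset_UNIV)
next
  case (Suc n) then show ?case using step by blast
qed

lemma stepf:
  "bb n \<in> YY n" "mm n < bb n" "cc n \<in> XX (Suc n)" "bb n < cc n"
  using step[OF conjunct1[OF inv] conjunct2[OF inv]] by blast+

lemma XX_sub: "XX n \<subseteq> {x. \<forall>k<n. x + bb k \<in> A}"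
proof (induction n)
  case 0 then show ?case by simp
next
  case (Suc n) then show ?case unfolding st_facts(5) using less_Suc_eq by auto
qed

lemma YY_sub: "YY n \<subseteq> {y. \<forall>k<n. y + cc k \<in> A}"
proof (induction n)
  case 0 then show ?case by simp
next
  case (Suc n) then show ?case unfolding st_facts(7) using less_Suc_eq by auto
qed

lemma result:
  "\<exists>B C :: nat set. B \<subseteq> {1..} \<and> C \<subseteq> {1..} \<and> infinite B \<and> infinite C \<and>
           {b + c | b c. b \<in> B \<and> c \<in> C} \<subseteq> A"
proof (intro exI conjI)
  have smb: "strict_mono bb"
  proof (rule strict_mono_Suc_iff[THEN iffD2], intro allI)
    fix n show "bb n < bb (Suc n)" using stepf(4)[of n] stepf(2)[of "Suc n"] st_facts(8)[of n] by simp
  qed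
  have smc: "strict_mono cc"
  proof (rule strict_mono_Suc_iff[THEN iffD2], intro allI)
    fix n show "cc n < cc (Suc n)" using stepf(4)[of "Suc n"] stepf(2)[of "Suc n"] st_facts(8)[of n] by simp
  qed
  show "infinite (range bb)" by (rule range_inj_infinite[OF strict_mono_imp_inj_on[OF smb]])
  show "infinite (range cc)" by (rule range_inj_infinite[OF strict_mono_imp_inj_on[OF smc]])
  have b1: "1 \<le> bb n" for n using stepf(2)[of n] by simp
  have c1: "1 \<le> cc n" for n using stepf(4)[of n] by simp
  show "range bb \<subseteq> {1..}" using b1 by auto
  show "range cc \<subseteq> {1..}" using c1 by auto
  show "{b + c | b c. b \<in> range bb \<and> c \<in> range cc} \<subseteq> A"
  proof clarify
    fix i j
    show "bb i + cc j \<in> A"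
    proof (cases "i \<le> j")
      case True
      then have "cc j + bb i \<in> A" using XX_sub[of "Suc j"] stepf(3)[of j] by auto
      then show ?thesis by (simp add: add.commute)
    next
      case False
      then show ?thesis using YY_sub[of i] stepf(1)[of i] by auto
    qed
  qed
qed

end

theorem theorem5p5:
  fixes A :: "nat set"
  assumes "A \<subseteq> {1..}" and "pseudorandom A"
  shows "\<exists>B C :: nat set. B \<subseteq> {1..} \<and> C \<subseteq> {1..} \<and> infinite B \<and> infinite C \<and>
           {b + c | b c. b \<in> B \<and> c \<in> C} \<subseteq> A"
proof -
  obtain \<alpha> :: real and U Nk c where apos: "\<alpha> > 0" and fu: "free_ultrafilter U" and Nl: "filterlim Nk at_top U"
    and lA: "loeb_measure_std U Nk A \<alpha>"
    and lc: "\<forall>i\<ge>1. loeb_measure_std U Nk {x \<in> A. x + i \<in> A} (c i)"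
    and ces: "(\<lambda>n. (\<Sum>i=1..n. \<bar>c i - \<alpha>\<^sup>2\<bar>) / real n) \<longlonglongrightarrow> 0"
    using assms(2) unfolding pseudorandom_def by blast
  have u: "ult U Nk" using fu Nl by (simp add: ult_def)
  interpret u: ult U Nk by (rule u)
  have lHA: "u.HA (indicator S) m" if "loeb_measure_std U Nk S m" for S m
  proof -
    have "u.avs (indicator S) = (\<lambda>k. real (card (S \<inter> {1..Nk k})) / real (Nk k))"
      by (rule ext) (rule u.avs_ind)
    then show ?thesis using that unfolding u.HA_def loeb_measure_std_def by simp
  qed
  have hA: "u.HA (indicator A) \<alpha>" by (rule lHA[OF lA])
  have hc: "u.HA (\<lambda>x. indicator A x * indicator A (x + i)) (c i)" if "i \<ge> 1" for i
  proof -
    have "indicator {x \<in> A. x + i \<in> A} = (\<lambda>x. indicator A x * indicator A (x + i) :: real)"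
      by (rule ext) (simp add: indicator_def)
    then show ?thesis using lHA[of "{x \<in> A. x + i \<in> A}" "c i"] lc that by simp
  qed
  have "prand U Nk A \<alpha> c"
    by (intro prand.intro u prand_axioms.intro apos hA hc ces)
  then interpret p: prand U Nk A \<alpha> c .
  show ?thesis by (rule p.result)
qed

end
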